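(* Let $k\equiv\pm1,\pm3\pmod{10}$. Then $\operatorname{Ker}\nu_{G^k}=\{M=\begin{pmatrix} a&b\\ c&d\end{pmatrix}\in\Gamma_{\theta,5}: b,c\in5\mathbb{Z}\text{ and }\tfrac b5\equiv\tfrac c5\pmod5\}$; in particular $\operatorname{Ker}\nu_{G^k}=\operatorname{Ker}\nu_{F^k}$.
   Context: $\Gamma_{\theta,5}=\{M\in SL(2,\mathbb{Z}): M\equiv\pm\begin{pmatrix}1&0\\0&1\end{pmatrix}\text{ or }\pm\begin{pmatrix}0&-1\\1&0\end{pmatrix}\pmod 5\}$. For $M=\begin{pmatrix} a&b\\ c&d\end{pmatrix}\in\Gamma_{\theta,5}$ define $g(M)=\frac{6b}{5}+\frac{2ab}{5}+\frac{2cd}{5}$ if $M\equiv I$, $\frac{24b}{5}+\frac{2ab}{5}+\frac{2cd}{5}$ if $M\equiv -I$, $5+\frac{6d}{5}+\frac{2ab}{5}+\frac{2cd}{5}$ if $M\equiv\begin{pmatrix}0&-1\\1&0\end{pmatrix}$, $5-\frac{6d}{5}+\frac{2ab}{5}+\frac{2cd}{5}$ if $M\equiv\begin{pmatrix}0&1\\-1&0\end{pmatrix}$ (all mod 5), and $f(M)$ by the same case split with values $\frac{4b}{5}+\frac{8ab}{5}+\frac{8cd}{5}$, $\frac{6b}{5}+\frac{8ab}{5}+\frac{8cd}{5}$, $5+\frac{4d}{5}+\frac{8ab}{5}+\frac{8cd}{5}$, $5-\frac{4d}{5}+\frac{8ab}{5}+\frac{8cd}{5}$ respectively. For $k\in\mathbb{Z}$,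 $\nu_{G^k}(M)=\exp(\frac{\pi ik}{5}g(M))$ and $\nu_{F^k}(M)=\exp(\frac{\pi ik}{5}f(M))$; these are the multiplier systems (weight $2k$) of $G^k$ and $F^k$, where $G=\eta^6/\big(\theta\begin{bmatrix}3/5\\3/5\end{bmatrix}\theta\begin{bmatrix}3/5\\7/5\end{bmatrix}\big)$, $F=\eta^6/\big(\theta\begin{bmatrix}1/5\\1/5\end{bmatrix}\theta\begin{bmatrix}1/5\\9/5\end{bmatrix}\big)$, with theta constants $\theta\begin{bmatrix}\epsilon\\ \epsilon'\end{bmatrix}=\sum_{n\in\mathbb{Z}}\exp(2\pi i[\frac12(n+\frac\epsilon2)^2\tau+(n+\frac\epsilon2)\frac{\epsilon'}2])$ and $\eta(\tau)=q^{1/24}\prod_{n\ge1}(1-q^n)$. Kernels are $\{M\in\Gamma_{\theta,5}:\nu(M)=1\}$. *)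

theory Defs
  imports Complex_Main "HOL-Number_Theory.Cong"
begin

text \<open>A matrix (a b; c d) in SL(2,Z) is represented by the quadruple (a,b,c,d).\<close>
type_synonym mat2 = "int \<times> int \<times> int \<times> int"

definition SL2Z :: "mat2 set" where
  "SL2Z = {(a,b,c,d). a*d - b*c = 1}"

definition cong_I :: "mat2 \<Rightarrow> bool" where
  "cong_I M = (case M of (a,b,c,d) \<Rightarrow>
     [a = 1] (mod 5) \<and> [b = 0] (mod 5) \<and> [c = 0] (mod 5) \<and> [d = 1] (mod 5))"
definition cong_mI :: "mat2 \<Rightarrow> bool" where
  "cong_mI M = (case M of (a,b,c,d) \<Rightarrow>
     [a = -1] (mod 5) \<and> [b = 0] (mod 5) \<and> [c = 0] (mod 5) \<and> [d = -1] (mod 5))"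
definition cong_S :: "mat2 \<Rightarrow> bool" where
  "cong_S M = (case M of (a,b,c,d) \<Rightarrow>
     [a = 0] (mod 5) \<and> [b = -1] (mod 5) \<and> [c = 1] (mod 5) \<and> [d = 0] (mod 5))"
definition cong_mS :: "mat2 \<Rightarrow> bool" where
  "cong_mS M = (case M of (a,b,c,d) \<Rightarrow>
     [a = 0] (mod 5) \<and> [b = 1] (mod 5) \<and> [c = -1] (mod 5) \<and> [d = 0] (mod 5))"

definition Gamma_theta5 :: "mat2 set" where
  "Gamma_theta5 = {M \<in> SL2Z. cong_I M \<or> cong_mI M \<or> cong_S M \<or> cong_mS M}"

definition g_fun :: "mat2 \<Rightarrow> real" where
  "g_fun M = (case M of (a,b,c,d) \<Rightarrow>
     (if cong_I M then 6*b/5 + 2*a*b/5 + 2*c*d/5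
      else if cong_mI M then 24*b/5 + 2*a*b/5 + 2*c*d/5
      else if cong_S M then 5 + 6*d/5 + 2*a*b/5 + 2*c*d/5
      else 5 - 6*d/5 + 2*a*b/5 + 2*c*d/5))"

definition f_fun :: "mat2 \<Rightarrow> real" where
  "f_fun M = (case M of (a,b,c,d) \<Rightarrow>
     (if cong_I M then 4*b/5 + 8*a*b/5 + 8*c*d/5
      else if cong_mI M then 6*b/5 + 8*a*b/5 + 8*c*d/5
      else if cong_S M then 5 + 4*d/5 + 8*a*b/5 + 8*c*d/5
      else 5 - 4*d/5 + 8*a*b/5 + 8*c*d/5))"

definition nu_G :: "int \<Rightarrow> mat2 \<Rightarrow> complex" where
  "nu_G k M = exp (\<i> * complex_of_real (pi * real_of_int k / 5 * g_fun M))"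

definition nu_F :: "int \<Rightarrow> mat2 \<Rightarrow> complex" where
  "nu_F k M = exp (\<i> * complex_of_real (pi * real_of_int k / 5 * f_fun M))"

definition ker_nu :: "(mat2 \<Rightarrow> complex) \<Rightarrow> mat2 set" where
  "ker_nu \<nu> = {M \<in> Gamma_theta5. \<nu> M = 1}"

end

theory Submission
  imports Defs "HOL-Analysis.Complex_Transcendental"
begin

lemma cop: assumes "k mod 10 \<in> {1,3,7,9::int}" shows "coprime (50::int) k"
proof -
  have "\<not> 2 dvd k" "\<not> 5 dvd k" using assms by (auto, presburger+)
  hence "coprime 2 k" "coprime 5 k" by (simp_all add: prime_imp_coprime)
  hence "coprime (2*(5*5)) k" by (simp only: coprime_mult_left_iff)
  thus ?thesis by simp
qed

lemma key: assumes "k mod 10 \<in> {1,3,7,9::int}"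
  shows "exp(\<i> * complex_of_real (pi * real_of_int k / 5 * (real_of_int N / 5))) = 1 \<longleftrightarrow> 50 dvd N"
proof -
  have "exp(\<i> * complex_of_real (pi * real_of_int k / 5 * (real_of_int N / 5))) = 1 \<longleftrightarrow>
    (\<exists>n::int. pi * real_of_int k / 5 * (real_of_int N / 5) = of_int (2 * n) * pi)"
    by (simp add: exp_eq_1)
  also have "\<dots> \<longleftrightarrow> (\<exists>n::int. k * N = 50 * n)"
  proof -
    have "pi * real_of_int k / 5 * (real_of_int N / 5) = of_int (2 * n) * pi \<longleftrightarrow> real_of_int (k*N) = real_of_int (50*n)" for n
      by (auto simp: field_simps)
    thus ?thesis by (simp only: of_int_eq_iff)
  qed
  also have "\<dots> \<longleftrightarrow> 50 dvd k * N" by (auto simp: dvd_def)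
  also have "\<dots> \<longleftrightarrow> 50 dvd N" using cop[OF assms] by (simp add: coprime_dvd_mult_right_iff)
  finally show ?thesis .
qed

definition gN :: "mat2 \<Rightarrow> int" where
  "gN M = (case M of (a,b,c,d) \<Rightarrow>
     (if cong_I M then 6*b + 2*a*b + 2*c*d
      else if cong_mI M then 24*b + 2*a*b + 2*c*d
      else if cong_S M then 25 + 6*d + 2*a*b + 2*c*d
      else 25 - 6*d + 2*a*b + 2*c*d))"

definition fN :: "mat2 \<Rightarrow> int" where
  "fN M = (case M of (a,b,c,d) \<Rightarrow>
     (if cong_I M then 4*b + 8*a*b + 8*c*d
      else if cong_mI M then 6*b + 8*a*b + 8*c*d
      else if cong_S M then 25 + 4*d + 8*a*b + 8*c*d
      else 25 - 4*d + 8*a*b + 8*c*d))"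

lemma g_eq: "g_fun M = real_of_int (gN M) / 5"
  by (cases M) (auto simp: g_fun_def gN_def field_simps)

lemma f_eq: "f_fun M = real_of_int (fN M) / 5"
  by (cases M) (auto simp: f_fun_def fN_def field_simps)

lemma nuG: assumes "k mod 10 \<in> {1,3,7,9::int}" shows "nu_G k M = 1 \<longleftrightarrow> 50 dvd gN M"
  unfolding nu_G_def g_eq using key[OF assms] by simp

lemma nuF: assumes "k mod 10 \<in> {1,3,7,9::int}" shows "nu_F k M = 1 \<longleftrightarrow> 50 dvd fN M"
  unfolding nu_F_def f_eq using key[OF assms] by simp

lemma decomp: "(x::int) = 5 * (x div 5) + x mod 5" by simp

lemma d50: "50 dvd (10*m) \<longleftrightarrow> 5 dvd (m::int)"
proof -
  have "(50::int) = 10 * 5" by simp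
  then show ?thesis by (simp only: mult_dvd_mono dvd_mult_cancel_left) simp
qed

lemma m5: "5 dvd (5*z + (y - x)) \<longleftrightarrow> (x::int) mod 5 = y mod 5"
proof -
  have "5 dvd (5*z + (y - x)) \<longleftrightarrow> 5 dvd (y-x)" by (rule dvd_add_right_iff) simp
  also have "\<dots> \<longleftrightarrow> 5 dvd (x - y)" by (rule dvd_diff_commute)
  finally show ?thesis by (simp add: mod_eq_dvd_iff)
qed

lemma odd50: "\<not> 50 dvd (25 + 2*x)" for x :: int
proof
  assume "50 dvd (25 + 2*x)"
  hence "2 dvd (25 + 2*x)" by (rule dvd_trans[rotated]) simp
  thus False by simp
qed

lemma caseI:
  fixes a b c d :: int
  assumes "a mod 5 = 1" "b mod 5 = 0" "c mod 5 = 0" "d mod 5 = 1"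
  shows "(50 dvd (6*b+2*a*b+2*c*d) \<longleftrightarrow> (b div 5) mod 5 = (c div 5) mod 5)
       \<and> (50 dvd (4*b+8*a*b+8*c*d) \<longleftrightarrow> (b div 5) mod 5 = (c div 5) mod 5)"
proof -
  define a1 b1 c1 d1 where "a1 = a div 5" "b1 = b div 5" "c1 = c div 5" "d1 = d div 5"
  have ha: "a = 5*a1+1" and hb: "b = 5*b1" and hc: "c = 5*c1" and hd: "d = 5*d1+1"
    using assms decomp[of a] decomp[of b] decomp[of c] decomp[of d] unfolding a1_b1_c1_d1_def by auto
  have e1: "6*b+2*a*b+2*c*d = 10*(5*(b1+a1*b1+c1*d1) + (c1 - b1))" unfolding ha hb hc hd by algebra
  have e2: "4*b+8*a*b+8*c*d = 10*(5*(b1+c1+4*a1*b1+4*c1*d1) + (b1 - c1))" unfolding ha hb hc hd by algebra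
  have r1: "50 dvd (6*b+2*a*b+2*c*d) \<longleftrightarrow> b1 mod 5 = c1 mod 5" unfolding e1 d50 m5 ..
  have r2: "50 dvd (4*b+8*a*b+8*c*d) \<longleftrightarrow> c1 mod 5 = b1 mod 5" unfolding e2 d50 m5 ..
  show ?thesis using r1 r2 unfolding a1_b1_c1_d1_def by auto
qed

lemma casemI:
  fixes a b c d :: int
  assumes "a mod 5 = 4" "b mod 5 = 0" "c mod 5 = 0" "d mod 5 = 4"
  shows "(50 dvd (24*b+2*a*b+2*c*d) \<longleftrightarrow> (b div 5) mod 5 = (c div 5) mod 5)
       \<and> (50 dvd (6*b+8*a*b+8*c*d) \<longleftrightarrow> (b div 5) mod 5 = (c div 5) mod 5)"
proof -
  define a1 b1 c1 d1 where "a1 = a div 5" "b1 = b div 5" "c1 = c div 5" "d1 = d div 5"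
  have ha: "a = 5*a1+4" and hb: "b = 5*b1" and hc: "c = 5*c1" and hd: "d = 5*d1+4"
    using assms decomp[of a] decomp[of b] decomp[of c] decomp[of d] unfolding a1_b1_c1_d1_def by auto
  have e1: "24*b+2*a*b+2*c*d = 10*(5*(3*b1+c1+a1*b1+c1*d1) + (b1 - c1))" unfolding ha hb hc hd by algebra
  have e2: "6*b+8*a*b+8*c*d = 10*(5*(4*b1+3*c1+4*a1*b1+4*c1*d1) + (c1 - b1))" unfolding ha hb hc hd by algebra
  have r1: "50 dvd (24*b+2*a*b+2*c*d) \<longleftrightarrow> c1 mod 5 = b1 mod 5" unfolding e1 d50 m5 ..
  have r2: "50 dvd (6*b+8*a*b+8*c*d) \<longleftrightarrow> b1 mod 5 = c1 mod 5" unfolding e2 d50 m5 ..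
  show ?thesis using r1 r2 unfolding a1_b1_c1_d1_def by auto
qed

lemma oddcase:
  fixes a b c d :: int
  shows "\<not> 50 dvd (25 + 6*d + 2*a*b + 2*c*d)" "\<not> 50 dvd (25 - 6*d + 2*a*b + 2*c*d)"
        "\<not> 50 dvd (25 + 4*d + 8*a*b + 8*c*d)" "\<not> 50 dvd (25 - 4*d + 8*a*b + 8*c*d)"
proof -
  have E1: "25 + 6*d + 2*a*b + 2*c*d = 25 + 2*(3*d+a*b+c*d)" by algebra
  show "\<not> 50 dvd (25 + 6*d + 2*a*b + 2*c*d)" unfolding E1 by (rule odd50)
  have E2: "25 - 6*d + 2*a*b + 2*c*d = 25 + 2*(-3*d+a*b+c*d)" by algebra
  show "\<not> 50 dvd (25 - 6*d + 2*a*b + 2*c*d)" unfolding E2 by (rule odd50)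
  have E3: "25 + 4*d + 8*a*b + 8*c*d = 25 + 2*(2*d+4*a*b+4*c*d)" by algebra
  show "\<not> 50 dvd (25 + 4*d + 8*a*b + 8*c*d)" unfolding E3 by (rule odd50)
  have E4: "25 - 4*d + 8*a*b + 8*c*d = 25 + 2*(-2*d+4*a*b+4*c*d)" by algebra
  show "\<not> 50 dvd (25 - 4*d + 8*a*b + 8*c*d)" unfolding E4 by (rule odd50)
qed

lemma cond:
  assumes "(a,b,c,d) \<in> Gamma_theta5"
  shows "(50 dvd gN (a,b,c,d) \<longleftrightarrow> (5 dvd b \<and> 5 dvd c \<and> [b div 5 = c div 5] (mod 5)))
       \<and> (50 dvd fN (a,b,c,d) \<longleftrightarrow> (5 dvd b \<and> 5 dvd c \<and> [b div 5 = c div 5] (mod 5)))"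
proof -
  have "cong_I (a,b,c,d) \<or> cong_mI (a,b,c,d) \<or> cong_S (a,b,c,d) \<or> cong_mS (a,b,c,d)"
    using assms by (simp add: Gamma_theta5_def)
  then consider
      "a mod 5 = 1" "b mod 5 = 0" "c mod 5 = 0" "d mod 5 = 1"
    | "a mod 5 = 4" "b mod 5 = 0" "c mod 5 = 0" "d mod 5 = 4"
    | "a mod 5 = 0" "b mod 5 = 4" "c mod 5 = 1" "d mod 5 = 0"
    | "a mod 5 = 0" "b mod 5 = 1" "c mod 5 = 4" "d mod 5 = 0"
    by (auto simp: cong_I_def cong_mI_def cong_S_def cong_mS_def cong_def)
  then show ?thesis
  proof cases
    case 1
    have cI: "cong_I (a,b,c,d)" using 1 by (simp add: cong_I_def cong_def)
    have g: "gN (a,b,c,d) = 6*b+2*a*b+2*c*d" "fN (a,b,c,d) = 4*b+8*a*b+8*c*d"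
      using cI by (simp_all add: gN_def fN_def)
    have "5 dvd b" "5 dvd c" using 1 by (simp_all add: dvd_eq_mod_eq_0)
    then show ?thesis using caseI[OF 1] unfolding g by (simp add: cong_def)
  next
    case 2
    then have "\<not> cong_I (a,b,c,d)" "cong_mI (a,b,c,d)"
      by (auto simp: cong_I_def cong_mI_def cong_def)
    then have g: "gN (a,b,c,d) = 24*b+2*a*b+2*c*d" "fN (a,b,c,d) = 6*b+8*a*b+8*c*d"
      by (simp_all add: gN_def fN_def)
    have "5 dvd b" "5 dvd c" using 2 by (simp_all add: dvd_eq_mod_eq_0)
    then show ?thesis using casemI[OF 2] unfolding g by (simp add: cong_def)
  next
    case 3
    then have "\<not> cong_I (a,b,c,d)" "\<not> cong_mI (a,b,c,d)" "cong_S (a,b,c,d)"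
      by (auto simp: cong_I_def cong_mI_def cong_S_def cong_def)
    then have g: "gN (a,b,c,d) = 25 + 6*d + 2*a*b + 2*c*d" "fN (a,b,c,d) = 25 + 4*d + 8*a*b + 8*c*d"
      by (simp_all add: gN_def fN_def)
    have "\<not> 5 dvd b" using 3 by (simp add: dvd_eq_mod_eq_0)
    then show ?thesis unfolding g using oddcase[of d a b c] by blast
  next
    case 4
    then have "\<not> cong_I (a,b,c,d)" "\<not> cong_mI (a,b,c,d)" "\<not> cong_S (a,b,c,d)"
      by (auto simp: cong_I_def cong_mI_def cong_S_def cong_def)
    then have g: "gN (a,b,c,d) = 25 - 6*d + 2*a*b + 2*c*d" "fN (a,b,c,d) = 25 - 4*d + 8*a*b + 8*c*d"
      by (simp_all add: gN_def fN_def)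
    have "\<not> 5 dvd b" using 4 by (simp add: dvd_eq_mod_eq_0)
    then show ?thesis unfolding g using oddcase[of d a b c] by blast
  qed
qed

theorem mainTheorem11:
  fixes k :: int
  assumes "k mod 10 \<in> {1, 3, 7, 9}"
  shows "ker_nu (nu_G k) =
           {(a,b,c,d) \<in> Gamma_theta5. 5 dvd b \<and> 5 dvd c \<and> [b div 5 = c div 5] (mod 5)}
         \<and> ker_nu (nu_G k) = ker_nu (nu_F k)"
proof -
  have A: "ker_nu (nu_G k) =
           {(a,b,c,d) \<in> Gamma_theta5. 5 dvd b \<and> 5 dvd c \<and> [b div 5 = c div 5] (mod 5)}"
    unfolding ker_nu_def using cond nuG[OF assms] by auto
  have B: "ker_nu (nu_F k) =
           {(a,b,c,d) \<in> Gamma_theta5. 5 dvd b \<and> 5 dvd c \<and> [b div 5 = c div 5] (mod 5)}"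
    unfolding ker_nu_def using cond nuF[OF assms] by auto
  show ?thesis using A B by simp
qed

end
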